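(* There is an absolute constant $c>0$ such that for every integer $k\ge 1$ and every integer $n\ge 2k$, there exists an $n$-vertex graph $G$ of pathwidth $k$ such that every EPG-representation of $G$ uses at least $c\,kn$ grid-edges (hence lies in a grid of area at least $c\,kn$).
   Context: The $w\times h$-grid consists of all grid-points $(i,j)$ with integer coordinates $1\le i\le w$, $1\le j\le h$, and all grid-edges joining grid-points at distance $1$; its area is $wh$. An EPG-representation of a graph $G$ assigns to each vertex $v$ a path $\mathrm{path}(v)$ in the grid such that $(v,w)$ is an edge of $G$ if and only if $\mathrm{path}(v)$ and $\mathrm{path}(w)$ share a grid-edge. The pathwidth of $G$ is the smallest $k$ such that $G$ is a subgraph of a $(k+1)$-colourable interval graph (an interval graph is the intersection graph of a family of closed intervals of the real line). *)

theory Defs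
  imports Complex_Main
begin

definition simple_graph :: "nat \<Rightarrow> (nat \<Rightarrow> nat \<Rightarrow> bool) \<Rightarrow> bool" where
  "simple_graph n E \<longleftrightarrow>
     (\<forall>u v. E u v \<longrightarrow> u < n \<and> v < n) \<and>
     (\<forall>u v. E u v \<longrightarrow> E v u) \<and>
     (\<forall>v. \<not> E v v)"

text \<open>G is a (spanning) subgraph of a (k+1)-colourable interval graph: each vertex v
  gets a closed real interval [a v, b v]; the interval graph joins distinct vertices whose
  intervals intersect; col is a proper (k+1)-colouring of that interval graph; every edge
  of G is an edge of the interval graph.\<close>

definition subgraph_of_colourable_interval_graph ::
    "nat \<Rightarrow> (nat \<Rightarrow> nat \<Rightarrow> bool) \<Rightarrow> nat \<Rightarrow> bool" where
  "subgraph_of_colourable_interval_graph n E m \<longleftrightarrow>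
     (\<exists>(a :: nat \<Rightarrow> real) (b :: nat \<Rightarrow> real) (col :: nat \<Rightarrow> nat).
        (\<forall>v<n. a v \<le> b v \<and> col v < m) \<and>
        (\<forall>u<n. \<forall>v<n. u \<noteq> v \<and> max (a u) (a v) \<le> min (b u) (b v) \<longrightarrow> col u \<noteq> col v) \<and>
        (\<forall>u<n. \<forall>v<n. E u v \<longrightarrow> max (a u) (a v) \<le> min (b u) (b v)))"

definition pathwidth :: "nat \<Rightarrow> (nat \<Rightarrow> nat \<Rightarrow> bool) \<Rightarrow> nat" where
  "pathwidth n E = (LEAST k. subgraph_of_colourable_interval_graph n E (k + 1))"

type_synonym point = "int \<times> int"

definition grid_adj :: "point \<Rightarrow> point \<Rightarrow> bool" where
  "grid_adj p q \<longleftrightarrow> \<bar>fst p - fst q\<bar> + \<bar>snd p - snd q\<bar> = 1"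

definition grid_path :: "point list \<Rightarrow> bool" where
  "grid_path P \<longleftrightarrow> length P \<ge> 2 \<and> distinct P \<and>
     (\<forall>i. i + 1 < length P \<longrightarrow> grid_adj (P ! i) (P ! (i + 1)))"

definition path_edges :: "point list \<Rightarrow> point set set" where
  "path_edges P = {{P ! i, P ! (i + 1)} | i. i + 1 < length P}"

definition epg_rep :: "nat \<Rightarrow> (nat \<Rightarrow> nat \<Rightarrow> bool) \<Rightarrow> (nat \<Rightarrow> point list) \<Rightarrow> bool" where
  "epg_rep n E path \<longleftrightarrow>
     (\<forall>v<n. grid_path (path v)) \<and>
     (\<forall>u<n. \<forall>v<n. u \<noteq> v \<longrightarrow>
        (E u v \<longleftrightarrow> path_edges (path u) \<inter> path_edges (path v) \<noteq> {}))"

definition in_grid :: "nat \<Rightarrow> nat \<Rightarrow> nat \<Rightarrow> (nat \<Rightarrow> point list) \<Rightarrow> bool" where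
  "in_grid w h n path \<longleftrightarrow>
     (\<forall>v<n. \<forall>p\<in>set (path v). 1 \<le> fst p \<and> fst p \<le> int w \<and> 1 \<le> snd p \<and> snd p \<le> int h)"

definition used_edges :: "nat \<Rightarrow> (nat \<Rightarrow> point list) \<Rightarrow> nat" where
  "used_edges n path = card (\<Union>v<n. path_edges (path v))"

end

theory Submission
  imports Defs
begin

definition Ekn :: "nat \<Rightarrow> nat \<Rightarrow> nat \<Rightarrow> nat \<Rightarrow> bool" where
  "Ekn k n u v \<longleftrightarrow> u < n \<and> v < n \<and> ((u < k \<and> k \<le> v) \<or> (v < k \<and> k \<le> u))"

lemma simple_Ekn: "simple_graph n (Ekn k n)"
  unfolding simple_graph_def Ekn_def by auto

lemma pw_upper: "subgraph_of_colourable_interval_graph n (Ekn k n) (k+1)"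
  unfolding subgraph_of_colourable_interval_graph_def
  apply (rule exI[of _ "\<lambda>v. if v < k then 0 else real v"])
  apply (rule exI[of _ "\<lambda>v. if v < k then real n else real v"])
  apply (rule exI[of _ "\<lambda>v. if v < k then v else k"])
  by (auto simp: Ekn_def)

lemma point_card:
  assumes col: "\<forall>v<n. col v < m"
    and pw: "\<forall>u<n. \<forall>v<n. u \<noteq> v \<and> max (a u) (a v) \<le> min (b u) (b v) \<longrightarrow> col u \<noteq> col v"
    and S: "S \<subseteq> {..<n}" and t: "\<forall>v\<in>S. a v \<le> (t::real) \<and> t \<le> b v"
  shows "card S \<le> m"
proof -
  have "inj_on col S"
  proof (rule inj_onI)
    fix u v assume "u \<in> S" "v \<in> S" "col u = col v"
    show "u = v"
    proof (rule ccontr)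
      assume "u \<noteq> v"
      moreover have "u < n" "v < n" using S \<open>u \<in> S\<close> \<open>v \<in> S\<close> by auto
      moreover have "a u \<le> t" "t \<le> b u" "a v \<le> t" "t \<le> b v"
        using t \<open>u \<in> S\<close> \<open>v \<in> S\<close> by auto
      then have "max (a u) (a v) \<le> min (b u) (b v)" by simp
      ultimately have "col u \<noteq> col v" using pw by blast
      with \<open>col u = col v\<close> show False by simp
    qed
  qed
  moreover have "col ` S \<subseteq> {..<m}" using col S by auto
  ultimately show ?thesis
    by (metis card_image card_lessThan card_mono finite_lessThan)
qed

lemma pw_lower:
  assumes k: "k \<ge> 1" and n: "n \<ge> 2*k"
    and H: "subgraph_of_colourable_interval_graph n (Ekn k n) m"
  shows "k + 1 \<le> m"
proof -
  from H obtain a b :: "nat \<Rightarrow> real" and col where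
    h1: "\<forall>v<n. a v \<le> b v \<and> col v < m" and
    h2: "\<forall>u<n. \<forall>v<n. u \<noteq> v \<and> max (a u) (a v) \<le> min (b u) (b v) \<longrightarrow> col u \<noteq> col v" and
    h3: "\<forall>u<n. \<forall>v<n. Ekn k n u v \<longrightarrow> max (a u) (a v) \<le> min (b u) (b v)"
    unfolding subgraph_of_colourable_interval_graph_def by blast
  have col: "\<forall>v<n. col v < m" using h1 by auto
  define B where "B = {k..<n}"
  have Bne: "B \<noteq> {}" "finite B" using k n by (auto simp: B_def)
  have "Min (b ` B) \<in> b ` B" using Bne by (intro Min_in) auto
  then obtain v1 where v1: "v1 \<in> B" "b v1 = Min (b ` B)" by auto
  have "Max (a ` B) \<in> a ` B" using Bne by (intro Max_in) auto
  then obtain v2 where v2: "v2 \<in> B" "a v2 = Max (a ` B)" by auto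
  have bmin: "\<forall>v\<in>B. b v1 \<le> b v" using v1 Bne by auto
  have amax: "\<forall>v\<in>B. a v \<le> a v2" using v2 Bne by auto
  have inter: "\<And>i v. i < k \<Longrightarrow> v \<in> B \<Longrightarrow> max (a i) (a v) \<le> min (b i) (b v)"
    using h3 n by (auto simp: B_def Ekn_def)
  show ?thesis
  proof (cases "a v2 \<le> b v1")
    case True
    define t where "t = max (a 0) (a v2)"
    have i1: "max (a 0) (a v1) \<le> min (b 0) (b v1)" using inter[of 0 v1] k v1 by auto
    have i2: "max (a 0) (a v2) \<le> min (b 0) (b v2)" using inter[of 0 v2] k v2 by auto
    have "\<forall>v\<in>insert 0 B. a v \<le> t \<and> t \<le> b v"
    proof
      fix v assume "v \<in> insert 0 B"
      then show "a v \<le> t \<and> t \<le> b v"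
      proof
        assume "v = 0" then show ?thesis using i1 i2 unfolding t_def by simp
      next
        assume vB: "v \<in> B"
        have "a v \<le> a v2" "b v1 \<le> b v" using vB bmin amax by auto
        then show ?thesis using True i1 i2 unfolding t_def by auto
      qed
    qed
    moreover have "insert 0 B \<subseteq> {..<n}" using k n by (auto simp: B_def)
    ultimately have "card (insert 0 B) \<le> m" using point_card[OF col h2] by blast
    moreover have "card (insert 0 B) = n - k + 1" using k by (simp add: B_def)
    ultimately show ?thesis using n by linarith
  next
    case False
    define t where "t = b v1"
    have "\<forall>v\<in>insert v1 {0..<k}. a v \<le> t \<and> t \<le> b v"
    proof
      fix v assume "v \<in> insert v1 {0..<k}"
      then show "a v \<le> t \<and> t \<le> b v"
      proof
        assume "v = v1" then show ?thesis using h1 v1 n by (auto simp: t_def B_def)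
      next
        assume "v \<in> {0..<k}"
        then have "v < k" by auto
        from inter[OF this v1(1)] inter[OF this v2(1)] False show ?thesis
          unfolding t_def by auto
      qed
    qed
    moreover have "insert v1 {0..<k} \<subseteq> {..<n}" using v1 n by (auto simp: B_def)
    ultimately have "card (insert v1 {0..<k}) \<le> m" using point_card[OF col h2] by blast
    moreover have "card (insert v1 {0..<k}) = k + 1" using v1 by (simp add: B_def)
    ultimately show ?thesis by linarith
  qed
qed

lemma pw_eq:
  assumes "k \<ge> 1" "n \<ge> 2*k"
  shows "pathwidth n (Ekn k n) = k"
  unfolding pathwidth_def
  apply (rule Least_equality)
  using pw_upper apply blast
  using pw_lower[OF assms] by fastforce


lemma finite_path_edges: "finite (path_edges P)"
proof -
  have "path_edges P = (\<lambda>i. {P ! i, P ! (i + 1)}) ` {i. i + 1 < length P}"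
    unfolding path_edges_def by auto
  moreover have "finite {i. i + 1 < length P}"
    by (rule finite_subset[of _ "{..<length P}"]) auto
  ultimately show ?thesis by simp
qed

lemma finite_U: "finite (\<Union>v<(n::nat). path_edges (path v))"
  by (intro finite_UN_I) (auto simp: finite_path_edges)

lemma used_lower:
  assumes "epg_rep n (Ekn k n) path" "k \<le> n"
  shows "k * (n - k) \<le> used_edges n path"
proof -
  define U where "U = (\<Union>v<n. path_edges (path v))"
  define f where "f = (\<lambda>(i,j). SOME e. e \<in> path_edges (path i) \<inter> path_edges (path j))"
  have ex: "f (i,j) \<in> path_edges (path i) \<inter> path_edges (path j)"
    if "i < k" "k \<le> j" "j < n" for i j
  proof -
    have "Ekn k n i j" using that by (auto simp: Ekn_def)
    then have "path_edges (path i) \<inter> path_edges (path j) \<noteq> {}"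
      using assms that unfolding epg_rep_def by (metis le_less_trans less_imp_le_nat not_le)
    then have "\<exists>e. e \<in> path_edges (path i) \<inter> path_edges (path j)" by blast
    from someI_ex[OF this] show ?thesis unfolding f_def by simp
  qed
  have inj: "inj_on f ({0..<k} \<times> {k..<n})"
  proof (rule inj_onI)
    fix x y assume x: "x \<in> {0..<k} \<times> {k..<n}" and y: "y \<in> {0..<k} \<times> {k..<n}" and fxy: "f x = f y"
    obtain i j where xij: "x = (i,j)" by force
    obtain i' j' where yij: "y = (i',j')" by force
    have r1: "f x \<in> path_edges (path i) \<inter> path_edges (path j)" using ex x xij by auto
    have r2: "f x \<in> path_edges (path i') \<inter> path_edges (path j')" using ex y yij fxy by auto
    have "i = i'"
    proof (rule ccontr)
      assume "i \<noteq> i'"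
      moreover have "\<not> Ekn k n i i'" using x y xij yij by (auto simp: Ekn_def)
      moreover have "i < n" "i' < n" using x y xij yij by auto
      ultimately have "path_edges (path i) \<inter> path_edges (path i') = {}"
        using assms(1) unfolding epg_rep_def by blast
      with r1 r2 show False by blast
    qed
    moreover have "j = j'"
    proof (rule ccontr)
      assume "j \<noteq> j'"
      moreover have "\<not> Ekn k n j j'" using x y xij yij by (auto simp: Ekn_def)
      moreover have "j < n" "j' < n" using x y xij yij by auto
      ultimately have "path_edges (path j) \<inter> path_edges (path j') = {}"
        using assms(1) unfolding epg_rep_def by blast
      with r1 r2 show False by blast
    qed
    ultimately show "x = y" using xij yij by simp
  qed
  have sub: "f ` ({0..<k} \<times> {k..<n}) \<subseteq> U"
  proof
    fix e assume "e \<in> f ` ({0..<k} \<times> {k..<n})"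
    then obtain i j where "i < k" "k \<le> j" "j < n" "e = f (i,j)" by auto
    then show "e \<in> U" using ex[of i j] unfolding U_def by auto
  qed
  have "card ({0..<k} \<times> {k..<n}) \<le> card U"
    using card_inj_on_le[OF inj sub] finite_U unfolding U_def by blast
  then show ?thesis unfolding used_edges_def U_def by (simp add: card_cartesian_product)
qed

definition stp :: "point \<times> point \<Rightarrow> point set" where
  "stp x = {fst x, (fst (fst x) + fst (snd x), snd (fst x) + snd (snd x))}"

lemma adj_cases:
  assumes "grid_adj p q"
  shows "{p, q} = stp (p, (1,0)) \<or> {p, q} = stp (q, (1,0)) \<or> {p, q} = stp (p, (0,1)) \<or> {p, q} = stp (q, (0,1))"
proof -
  obtain a b where p: "p = (a,b)" by force
  obtain c d where q: "q = (c,d)" by force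
  have "\<bar>a - c\<bar> + \<bar>b - d\<bar> = 1" using assms p q by (simp add: grid_adj_def)
  then have "(c = a + 1 \<and> d = b) \<or> (a = c + 1 \<and> b = d) \<or> (c = a \<and> d = b + 1) \<or> (a = c \<and> b = d + 1)"
    by arith
  then show ?thesis using p q by (auto simp: stp_def insert_commute)
qed

lemma used_upper:
  assumes "epg_rep n E path" "in_grid w h n path"
  shows "used_edges n path \<le> 2 * (w * h)"
proof -
  define G where "G = {1..int w} \<times> {1..int h}"
  define D where "D = {((1::int),(0::int)), (0,1)}"
  have sub: "(\<Union>v<n. path_edges (path v)) \<subseteq> stp ` (G \<times> D)"
  proof
    fix e assume "e \<in> (\<Union>v<n. path_edges (path v))"
    then obtain v i where v: "v < n" "i + 1 < length (path v)" "e = {path v ! i, path v ! (i+1)}"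
      unfolding path_edges_def by auto
    define p where "p = path v ! i"
    define q where "q = path v ! (i+1)"
    have adj: "grid_adj p q" using assms(1) v unfolding epg_rep_def grid_path_def p_def q_def by blast
    have "p \<in> set (path v)" "q \<in> set (path v)" using v unfolding p_def q_def by auto
    then have pG: "p \<in> G" and qG: "q \<in> G" using assms(2) v unfolding in_grid_def G_def
      by (auto simp: mem_Times_iff)
    have eq: "e = {p, q}" using v p_def q_def by simp
    show "e \<in> stp ` (G \<times> D)"
      using adj_cases[OF adj] pG qG unfolding eq D_def by blast
  qed
  have "card (\<Union>v<n. path_edges (path v)) \<le> card (stp ` (G \<times> D))"
    by (rule card_mono[OF _ sub]) (simp add: G_def D_def)
  also have "\<dots> \<le> card (G \<times> D)" by (rule card_image_le) (simp add: G_def D_def)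
  also have "\<dots> = 2 * (w * h)" by (simp add: G_def D_def card_cartesian_product)
  finally show ?thesis unfolding used_edges_def .
qed

theorem corollary5:
  shows "\<exists>c :: real. c > 0 \<and>
    (\<forall>k n :: nat. k \<ge> 1 \<longrightarrow> n \<ge> 2 * k \<longrightarrow>
      (\<exists>E. simple_graph n E \<and> pathwidth n E = k \<and>
        (\<forall>path. epg_rep n E path \<longrightarrow> real (used_edges n path) \<ge> c * real k * real n) \<and>
        (\<forall>w h path. epg_rep n E path \<and> in_grid w h n path \<longrightarrow>
            real (w * h) \<ge> c * real k * real n)))"
proof (intro exI[of _ "1/4"] conjI allI impI)
  show "(0::real) < 1/4" by simp
next
  fix k n :: nat assume k: "k \<ge> 1" and n: "n \<ge> 2 * k"
  have key: "real k * real n / 2 \<le> real (k * (n - k))"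
  proof -
    have e: "real (k * (n - k)) = real k * (real n - real k)" using n by (simp only: of_nat_mult of_nat_diff)
    have h: "real n / 2 \<le> real n - real k" using n by simp
    have "real k * (real n / 2) \<le> real k * (real n - real k)"
      by (rule mult_left_mono[OF h]) simp
    then show ?thesis unfolding e by simp
  qed
  have nn: "0 \<le> real k * real n" by simp
  show "\<exists>E. simple_graph n E \<and> pathwidth n E = k \<and>
        (\<forall>path. epg_rep n E path \<longrightarrow> real (used_edges n path) \<ge> 1/4 * real k * real n) \<and>
        (\<forall>w h path. epg_rep n E path \<and> in_grid w h n path \<longrightarrow>
            real (w * h) \<ge> 1/4 * real k * real n)"
  proof (intro exI[of _ "Ekn k n"] conjI allI impI)
    show "simple_graph n (Ekn k n)" by (rule simple_Ekn)
    show "pathwidth n (Ekn k n) = k" using pw_eq k n by blast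
  next
    fix path assume "epg_rep n (Ekn k n) path"
    then have "k * (n - k) \<le> used_edges n path" using used_lower n by simp
    then have "real (k * (n - k)) \<le> real (used_edges n path)" by linarith
    then show "1/4 * real k * real n \<le> real (used_edges n path)" using key nn
      by linarith
  next
    fix w h path assume a: "epg_rep n (Ekn k n) path \<and> in_grid w h n path"
    then have "k * (n - k) \<le> used_edges n path" using used_lower n by simp
    moreover have "used_edges n path \<le> 2 * (w * h)" using used_upper a by blast
    ultimately have "k * (n - k) \<le> 2 * (w * h)" by (rule le_trans)
    then have "real (k * (n - k)) \<le> real (2 * (w * h))" by (simp only: of_nat_le_iff)
    then have "real (k * (n - k)) \<le> 2 * real (w * h)" by simp
    then show "1/4 * real k * real n \<le> real (w * h)" using key nn by linarith
  qed
qed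

end
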